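(* Let $G$ be a reaction network with one-dimensional stoichiometric subspace and let $c^*$ be a total-constant vector. If for a rate-constant vector $\kappa^*$, $G$ has a positive steady state in $\mathcal P_{c^*}$, then: (1) for every $z\in I$, $\phi(\hat\kappa;x_1)$ is well-defined at $z$; (2) for every $k\in\mathcal H\setminus\{\tau\}$, $Y_k(-B_\tau/A_\tau)>0$ (here $-B_\tau/A_\tau$ is the left endpoint of $I$); (3) $\phi(\hat\kappa;x_1)$ is well-defined at the left endpoint of $I$.
   Context: A reaction network $G$ has species $X_1,\dots,X_s$ and $m$ reactions $\sum_{i}\alpha_{ij}X_i\to\sum_i\beta_{ij}X_i$, $\alpha_{ij},\beta_{ij}\in\mathbb Z_{\ge0}$, $(\alpha_{1j},\dots,\alpha_{sj})\neq(\beta_{1j},\dots,\beta_{sj})$. $\mathcal N$ has entries $\beta_{ij}-\alpha_{ij}$, $S=\mathrm{im}\,\mathcal N$. For $\kappa\in\mathbb R^m_{>0}$, $f(\kappa;x)=\mathcal N(\kappa_1\prod_i x_i^{\alpha_{i1}},\dots,\kappa_m\prod_i x_i^{\alpha_{im}})^\top$. Since $S$ is one-dimensional, species are labelled so that $\beta_{11}-\alpha_{11}\ne0$, and there are $\lambda_j\ne0$ ($\lambda_1=1$) with $\beta_{ij}-\alpha_{ij}=\lambda_j(\beta_{i1}-\alpha_{i1})$. For $c\in\mathbb R^{s-1}$, $\mathcal P_c=\{x\in\mathbb R^s_{\ge0}:(\beta_{i1}-\alpha_{i1})x_1-(\beta_{11}-\alpha_{11})x_i=c_{i-1},\ i=2,\dots,s\}$.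 A positive steady state is $x\in\mathbb R^s_{>0}$ with $f(\kappa;x)=0$. Notation for $c^*$: $A_1=1,B_1=0$, $A_i=\frac{\beta_{i1}-\alpha_{i1}}{\beta_{11}-\alpha_{11}}$, $B_i=-\frac{c^*_{i-1}}{\beta_{11}-\alpha_{11}}$ ($i\ge2$). $[i]=\{k:A_k\ne0,B_k/A_k=B_i/A_i\}$ if $A_i\ne0$, $[i]=\{k:A_k=0\}$ otherwise; species labelled so that $1,\dots,r$ represent the $r$ distinct classes. $\varphi_k=\min_j\sum_{i\in[k]}\alpha_{ij}$, $\gamma_{kj}=\sum_{i\in[k]}\alpha_{ij}-\varphi_k$. $\mathcal J=\{i:A_i\ne0\}$, $\mathcal H=\{k\in\{1,\dots,r\}\cap\mathcal J:\gamma_{k1},\dots,\gamma_{km}\text{ not all equal}\}$. Standing assumption: if for some rate constants $G$ has $N$ positive steady states in $\mathcal P_{c^*}$ with $0<N<\infty$, species are labelled so that $1\in\mathcal H$. $I_i=(-B_i/A_i,+\infty)$ if $A_i>0$, $(0,+\infty)$ if $A_i=0$, $(0,-B_i/A_i)$ if $A_i<0$; $I=\bigcap_{k\in\mathcal H}I_k$; $\tau$ is the index in $\mathcal H$ with $A_\tau>0$ such that $-B_\tau/A_\tau$ is the left endpoint of $I$. $Y_i(x_1)=(A_ix_1+B_i)/|A_i|$ if $i\in\mathcal J$, $1$ otherwise; $\mathcal C_j=\prod_{i\in\mathcal J}|A_i|^{\alpha_{ij}}\prod_{i\notin\mathcal J}B_i^{\alpha_{ij}}$; $P_j(x_1)=\mathcal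 C_j\prod_{k\in\mathcal H}Y_k(x_1)^{\gamma_{kj}}$; $\ell$ is an index $j$ minimizing $\gamma_{\tau j}$; $\hat\kappa=(\kappa_1,\dots,\kappa_{\ell-1},\kappa_{\ell+1},\dots,\kappa_m)$ and $\phi(\hat\kappa;x_1)=-\frac{\sum_{j\neq\ell}\lambda_j\kappa_jP_j(x_1)}{\lambda_\ell P_\ell(x_1)}$; $\phi$ is well-defined at $z$ if $P_\ell(z)\neq0$. *)

theory Defs
  imports Complex_Main
begin

text \<open>Conventions: species are indexed by 1..s, reactions by 1..m.
  alpha i j, beta i j are the reactant / product stoichiometric coefficients of species i
  in reaction j.  Concentration vectors and rate-constant vectors are functions on nat,
  only their values on the index ranges matter.  The total-constant vector c is indexed
  by 1..s-1.\<close>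

definition stoich :: "(nat \<Rightarrow> nat \<Rightarrow> nat) \<Rightarrow> (nat \<Rightarrow> nat \<Rightarrow> nat) \<Rightarrow> nat \<Rightarrow> nat \<Rightarrow> real" where
  "stoich \<alpha> \<beta> i j = real (\<beta> i j) - real (\<alpha> i j)"

definition reaction_network :: "nat \<Rightarrow> nat \<Rightarrow> (nat \<Rightarrow> nat \<Rightarrow> nat) \<Rightarrow> (nat \<Rightarrow> nat \<Rightarrow> nat) \<Rightarrow> bool" where
  "reaction_network s m \<alpha> \<beta> \<longleftrightarrow> 1 \<le> s \<and> 1 \<le> m \<and>
     (\<forall>j\<in>{1..m}. \<exists>i\<in>{1..s}. \<alpha> i j \<noteq> \<beta> i j)"

definition lam :: "(nat \<Rightarrow> nat \<Rightarrow> nat) \<Rightarrow> (nat \<Rightarrow> nat \<Rightarrow> nat) \<Rightarrow> nat \<Rightarrow> real" where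
  "lam \<alpha> \<beta> j = stoich \<alpha> \<beta> 1 j / stoich \<alpha> \<beta> 1 1"

definition one_dim_labelled :: "nat \<Rightarrow> nat \<Rightarrow> (nat \<Rightarrow> nat \<Rightarrow> nat) \<Rightarrow> (nat \<Rightarrow> nat \<Rightarrow> nat) \<Rightarrow> bool" where
  "one_dim_labelled s m \<alpha> \<beta> \<longleftrightarrow> stoich \<alpha> \<beta> 1 1 \<noteq> 0 \<and>
     (\<forall>j\<in>{1..m}. \<exists>lj. lj \<noteq> 0 \<and> (\<forall>i\<in>{1..s}. stoich \<alpha> \<beta> i j = lj * stoich \<alpha> \<beta> i 1))"

definition fvec :: "nat \<Rightarrow> nat \<Rightarrow> (nat \<Rightarrow> nat \<Rightarrow> nat) \<Rightarrow> (nat \<Rightarrow> nat \<Rightarrow> nat) \<Rightarrow> (nat \<Rightarrow> real) \<Rightarrow> (nat \<Rightarrow> real) \<Rightarrow> nat \<Rightarrow> real" where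
  "fvec s m \<alpha> \<beta> \<kappa> x i = (\<Sum>j\<in>{1..m}. stoich \<alpha> \<beta> i j * (\<kappa> j * (\<Prod>i'\<in>{1..s}. x i' ^ \<alpha> i' j)))"

definition pos_steady_state :: "nat \<Rightarrow> nat \<Rightarrow> (nat \<Rightarrow> nat \<Rightarrow> nat) \<Rightarrow> (nat \<Rightarrow> nat \<Rightarrow> nat) \<Rightarrow> (nat \<Rightarrow> real) \<Rightarrow> (nat \<Rightarrow> real) \<Rightarrow> bool" where
  "pos_steady_state s m \<alpha> \<beta> \<kappa> x \<longleftrightarrow> (\<forall>i\<in>{1..s}. 0 < x i) \<and> (\<forall>i\<in>{1..s}. fvec s m \<alpha> \<beta> \<kappa> x i = 0)"

definition in_compat_class :: "nat \<Rightarrow> (nat \<Rightarrow> nat \<Rightarrow> nat) \<Rightarrow> (nat \<Rightarrow> nat \<Rightarrow> nat) \<Rightarrow> (nat \<Rightarrow> real) \<Rightarrow> (nat \<Rightarrow> real) \<Rightarrow> bool" where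
  "in_compat_class s \<alpha> \<beta> c x \<longleftrightarrow> (\<forall>i\<in>{1..s}. 0 \<le> x i) \<and>
     (\<forall>i\<in>{2..s}. stoich \<alpha> \<beta> i 1 * x 1 - stoich \<alpha> \<beta> 1 1 * x i = c (i - 1))"

definition pss_set :: "nat \<Rightarrow> nat \<Rightarrow> (nat \<Rightarrow> nat \<Rightarrow> nat) \<Rightarrow> (nat \<Rightarrow> nat \<Rightarrow> nat) \<Rightarrow> (nat \<Rightarrow> real) \<Rightarrow> (nat \<Rightarrow> real) \<Rightarrow> (nat \<Rightarrow> real) set" where
  "pss_set s m \<alpha> \<beta> \<kappa> c = {x. (\<forall>i. i \<notin> {1..s} \<longrightarrow> x i = 0) \<and> in_compat_class s \<alpha> \<beta> c x \<and>
       pos_steady_state s m \<alpha> \<beta> \<kappa> x}"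

definition Acoef :: "(nat \<Rightarrow> nat \<Rightarrow> nat) \<Rightarrow> (nat \<Rightarrow> nat \<Rightarrow> nat) \<Rightarrow> nat \<Rightarrow> real" where
  "Acoef \<alpha> \<beta> i = (if i = 1 then 1 else stoich \<alpha> \<beta> i 1 / stoich \<alpha> \<beta> 1 1)"

definition Bcoef :: "(nat \<Rightarrow> nat \<Rightarrow> nat) \<Rightarrow> (nat \<Rightarrow> nat \<Rightarrow> nat) \<Rightarrow> (nat \<Rightarrow> real) \<Rightarrow> nat \<Rightarrow> real" where
  "Bcoef \<alpha> \<beta> c i = (if i = 1 then 0 else - c (i - 1) / stoich \<alpha> \<beta> 1 1)"

definition cls :: "nat \<Rightarrow> (nat \<Rightarrow> nat \<Rightarrow> nat) \<Rightarrow> (nat \<Rightarrow> nat \<Rightarrow> nat) \<Rightarrow> (nat \<Rightarrow> real) \<Rightarrow> nat \<Rightarrow> nat set" where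
  "cls s \<alpha> \<beta> c i = (if Acoef \<alpha> \<beta> i \<noteq> 0
     then {k\<in>{1..s}. Acoef \<alpha> \<beta> k \<noteq> 0 \<and> Bcoef \<alpha> \<beta> c k / Acoef \<alpha> \<beta> k = Bcoef \<alpha> \<beta> c i / Acoef \<alpha> \<beta> i}
     else {k\<in>{1..s}. Acoef \<alpha> \<beta> k = 0})"

text \<open>Species 1..r represent the r distinct classes.\<close>
definition classes_labelled :: "nat \<Rightarrow> (nat \<Rightarrow> nat \<Rightarrow> nat) \<Rightarrow> (nat \<Rightarrow> nat \<Rightarrow> nat) \<Rightarrow> (nat \<Rightarrow> real) \<Rightarrow> nat \<Rightarrow> bool" where
  "classes_labelled s \<alpha> \<beta> c r \<longleftrightarrow> 1 \<le> r \<and> r \<le> s \<and>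
     (\<forall>k\<in>{1..r}. \<forall>k'\<in>{1..r}. k \<noteq> k' \<longrightarrow> cls s \<alpha> \<beta> c k \<noteq> cls s \<alpha> \<beta> c k') \<and>
     (\<forall>i\<in>{1..s}. \<exists>k\<in>{1..r}. cls s \<alpha> \<beta> c i = cls s \<alpha> \<beta> c k)"

definition phik :: "nat \<Rightarrow> nat \<Rightarrow> (nat \<Rightarrow> nat \<Rightarrow> nat) \<Rightarrow> (nat \<Rightarrow> nat \<Rightarrow> nat) \<Rightarrow> (nat \<Rightarrow> real) \<Rightarrow> nat \<Rightarrow> nat" where
  "phik s m \<alpha> \<beta> c k = Min ((\<lambda>j. \<Sum>i\<in>cls s \<alpha> \<beta> c k. \<alpha> i j) ` {1..m})"

definition gam :: "nat \<Rightarrow> nat \<Rightarrow> (nat \<Rightarrow> nat \<Rightarrow> nat) \<Rightarrow> (nat \<Rightarrow> nat \<Rightarrow> nat) \<Rightarrow> (nat \<Rightarrow> real) \<Rightarrow> nat \<Rightarrow> nat \<Rightarrow> nat" where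
  "gam s m \<alpha> \<beta> c k j = (\<Sum>i\<in>cls s \<alpha> \<beta> c k. \<alpha> i j) - phik s m \<alpha> \<beta> c k"

definition Jset :: "nat \<Rightarrow> (nat \<Rightarrow> nat \<Rightarrow> nat) \<Rightarrow> (nat \<Rightarrow> nat \<Rightarrow> nat) \<Rightarrow> nat set" where
  "Jset s \<alpha> \<beta> = {i\<in>{1..s}. Acoef \<alpha> \<beta> i \<noteq> 0}"

definition Hset :: "nat \<Rightarrow> nat \<Rightarrow> (nat \<Rightarrow> nat \<Rightarrow> nat) \<Rightarrow> (nat \<Rightarrow> nat \<Rightarrow> nat) \<Rightarrow> (nat \<Rightarrow> real) \<Rightarrow> nat \<Rightarrow> nat set" where
  "Hset s m \<alpha> \<beta> c r = {k\<in>{1..r}. k \<in> Jset s \<alpha> \<beta> \<and>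
      (\<exists>j\<in>{1..m}. \<exists>j'\<in>{1..m}. gam s m \<alpha> \<beta> c k j \<noteq> gam s m \<alpha> \<beta> c k j')}"

definition standing_assumption :: "nat \<Rightarrow> nat \<Rightarrow> (nat \<Rightarrow> nat \<Rightarrow> nat) \<Rightarrow> (nat \<Rightarrow> nat \<Rightarrow> nat) \<Rightarrow> (nat \<Rightarrow> real) \<Rightarrow> nat \<Rightarrow> bool" where
  "standing_assumption s m \<alpha> \<beta> c r \<longleftrightarrow>
     (\<forall>\<kappa>. (\<forall>j\<in>{1..m}. 0 < \<kappa> j) \<longrightarrow> pss_set s m \<alpha> \<beta> \<kappa> c \<noteq> {} \<longrightarrow> finite (pss_set s m \<alpha> \<beta> \<kappa> c)
        \<longrightarrow> 1 \<in> Hset s m \<alpha> \<beta> c r)"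

definition Iint :: "(nat \<Rightarrow> nat \<Rightarrow> nat) \<Rightarrow> (nat \<Rightarrow> nat \<Rightarrow> nat) \<Rightarrow> (nat \<Rightarrow> real) \<Rightarrow> nat \<Rightarrow> real set" where
  "Iint \<alpha> \<beta> c i = (if Acoef \<alpha> \<beta> i > 0 then {- Bcoef \<alpha> \<beta> c i / Acoef \<alpha> \<beta> i <..}
     else if Acoef \<alpha> \<beta> i = 0 then {0<..}
     else {0 <..< - Bcoef \<alpha> \<beta> c i / Acoef \<alpha> \<beta> i})"

definition Iset :: "nat \<Rightarrow> nat \<Rightarrow> (nat \<Rightarrow> nat \<Rightarrow> nat) \<Rightarrow> (nat \<Rightarrow> nat \<Rightarrow> nat) \<Rightarrow> (nat \<Rightarrow> real) \<Rightarrow> nat \<Rightarrow> real set" where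
  "Iset s m \<alpha> \<beta> c r = (\<Inter>k\<in>Hset s m \<alpha> \<beta> c r. Iint \<alpha> \<beta> c k)"

definition is_tau :: "nat \<Rightarrow> nat \<Rightarrow> (nat \<Rightarrow> nat \<Rightarrow> nat) \<Rightarrow> (nat \<Rightarrow> nat \<Rightarrow> nat) \<Rightarrow> (nat \<Rightarrow> real) \<Rightarrow> nat \<Rightarrow> nat \<Rightarrow> bool" where
  "is_tau s m \<alpha> \<beta> c r \<tau> \<longleftrightarrow> \<tau> \<in> Hset s m \<alpha> \<beta> c r \<and> Acoef \<alpha> \<beta> \<tau> > 0 \<and>
     Iset s m \<alpha> \<beta> c r \<noteq> {} \<and> Inf (Iset s m \<alpha> \<beta> c r) = - Bcoef \<alpha> \<beta> c \<tau> / Acoef \<alpha> \<beta> \<tau>"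

definition Ycoord :: "nat \<Rightarrow> (nat \<Rightarrow> nat \<Rightarrow> nat) \<Rightarrow> (nat \<Rightarrow> nat \<Rightarrow> nat) \<Rightarrow> (nat \<Rightarrow> real) \<Rightarrow> nat \<Rightarrow> real \<Rightarrow> real" where
  "Ycoord s \<alpha> \<beta> c i x1 = (if i \<in> Jset s \<alpha> \<beta>
     then (Acoef \<alpha> \<beta> i * x1 + Bcoef \<alpha> \<beta> c i) / \<bar>Acoef \<alpha> \<beta> i\<bar> else 1)"

definition Cconst :: "nat \<Rightarrow> (nat \<Rightarrow> nat \<Rightarrow> nat) \<Rightarrow> (nat \<Rightarrow> nat \<Rightarrow> nat) \<Rightarrow> (nat \<Rightarrow> real) \<Rightarrow> nat \<Rightarrow> real" where
  "Cconst s \<alpha> \<beta> c j = (\<Prod>i\<in>Jset s \<alpha> \<beta>. \<bar>Acoef \<alpha> \<beta> i\<bar> ^ \<alpha> i j) *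
      (\<Prod>i\<in>{1..s} - Jset s \<alpha> \<beta>. Bcoef \<alpha> \<beta> c i ^ \<alpha> i j)"

definition Ppoly :: "nat \<Rightarrow> nat \<Rightarrow> (nat \<Rightarrow> nat \<Rightarrow> nat) \<Rightarrow> (nat \<Rightarrow> nat \<Rightarrow> nat) \<Rightarrow> (nat \<Rightarrow> real) \<Rightarrow> nat \<Rightarrow> nat \<Rightarrow> real \<Rightarrow> real" where
  "Ppoly s m \<alpha> \<beta> c r j x1 = Cconst s \<alpha> \<beta> c j *
      (\<Prod>k\<in>Hset s m \<alpha> \<beta> c r. Ycoord s \<alpha> \<beta> c k x1 ^ gam s m \<alpha> \<beta> c k j)"

definition is_ell :: "nat \<Rightarrow> nat \<Rightarrow> (nat \<Rightarrow> nat \<Rightarrow> nat) \<Rightarrow> (nat \<Rightarrow> nat \<Rightarrow> nat) \<Rightarrow> (nat \<Rightarrow> real) \<Rightarrow> nat \<Rightarrow> nat \<Rightarrow> bool" where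
  "is_ell s m \<alpha> \<beta> c \<tau> ell \<longleftrightarrow> ell \<in> {1..m} \<and> (\<forall>j\<in>{1..m}. gam s m \<alpha> \<beta> c \<tau> ell \<le> gam s m \<alpha> \<beta> c \<tau> j)"

text \<open>phi(kappa-hat; x1); it only involves kappa_j for j \<noteq> ell.\<close>
definition phi_fun :: "nat \<Rightarrow> nat \<Rightarrow> (nat \<Rightarrow> nat \<Rightarrow> nat) \<Rightarrow> (nat \<Rightarrow> nat \<Rightarrow> nat) \<Rightarrow> (nat \<Rightarrow> real) \<Rightarrow> nat \<Rightarrow> nat \<Rightarrow> (nat \<Rightarrow> real) \<Rightarrow> real \<Rightarrow> real" where
  "phi_fun s m \<alpha> \<beta> c r ell \<kappa> x1 =
     - (\<Sum>j\<in>{1..m} - {ell}. lam \<alpha> \<beta> j * \<kappa> j * Ppoly s m \<alpha> \<beta> c r j x1) / (lam \<alpha> \<beta> ell * Ppoly s m \<alpha> \<beta> c r ell x1)"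

definition phi_well_defined :: "nat \<Rightarrow> nat \<Rightarrow> (nat \<Rightarrow> nat \<Rightarrow> nat) \<Rightarrow> (nat \<Rightarrow> nat \<Rightarrow> nat) \<Rightarrow> (nat \<Rightarrow> real) \<Rightarrow> nat \<Rightarrow> nat \<Rightarrow> real \<Rightarrow> bool" where
  "phi_well_defined s m \<alpha> \<beta> c r ell z \<longleftrightarrow> Ppoly s m \<alpha> \<beta> c r ell z \<noteq> 0"

end

theory Submission
  imports Defs
begin

lemma C_nonzero:
  assumes onedim: "one_dim_labelled s m \<alpha> \<beta>"
    and x: "in_compat_class s \<alpha> \<beta> cs x" "pos_steady_state s m \<alpha> \<beta> \<kappa>s x"
  shows "Cconst s \<alpha> \<beta> cs j \<noteq> 0"
proof -
  have s11: "stoich \<alpha> \<beta> 1 1 \<noteq> 0" using onedim by (simp add: one_dim_labelled_def)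
  have fJ: "finite (Jset s \<alpha> \<beta>)" by (simp add: Jset_def)
  have A: "(\<Prod>i\<in>Jset s \<alpha> \<beta>. \<bar>Acoef \<alpha> \<beta> i\<bar> ^ \<alpha> i j) \<noteq> 0"
    using fJ by (simp add: Jset_def)
  have B: "Bcoef \<alpha> \<beta> cs i \<noteq> 0" if i: "i \<in> {1..s} - Jset s \<alpha> \<beta>" for i
  proof -
    have A0: "Acoef \<alpha> \<beta> i = 0" using i by (simp add: Jset_def)
    hence i1: "i \<noteq> 1" by (auto simp: Acoef_def)
    hence "stoich \<alpha> \<beta> i 1 = 0" using A0 s11 by (simp add: Acoef_def)
    moreover have "i \<in> {2..s}" using i i1 by auto
    moreover have "stoich \<alpha> \<beta> i 1 * x 1 - stoich \<alpha> \<beta> 1 1 * x i = cs (i - 1)"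
      using x(1) \<open>i \<in> {2..s}\<close> unfolding in_compat_class_def by blast
    ultimately have "- stoich \<alpha> \<beta> 1 1 * x i = cs (i - 1)" by simp
    hence "Bcoef \<alpha> \<beta> cs i = x i" using i1 s11 by (auto simp: Bcoef_def field_simps)
    moreover have "x i > 0" using x(2) i by (simp add: pos_steady_state_def)
    ultimately show ?thesis by simp
  qed
  have "(\<Prod>i\<in>{1..s} - Jset s \<alpha> \<beta>. Bcoef \<alpha> \<beta> cs i ^ \<alpha> i j) \<noteq> 0"
    using B by (simp add: prod_zero_iff)
  with A show ?thesis by (simp add: Cconst_def)
qed

theorem lemma5p12:
  fixes s m r :: nat and \<alpha> \<beta> :: "nat \<Rightarrow> nat \<Rightarrow> nat"
    and cs \<kappa>s :: "nat \<Rightarrow> real"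
  assumes net: "reaction_network s m \<alpha> \<beta>"
    and onedim: "one_dim_labelled s m \<alpha> \<beta>"
    and lab: "classes_labelled s \<alpha> \<beta> cs r"
    and standing: "standing_assumption s m \<alpha> \<beta> cs r"
    and kpos: "\<forall>j\<in>{1..m}. 0 < \<kappa>s j"
    and ss: "\<exists>x. in_compat_class s \<alpha> \<beta> cs x \<and> pos_steady_state s m \<alpha> \<beta> \<kappa>s x"
  shows "\<forall>\<tau>. is_tau s m \<alpha> \<beta> cs r \<tau> \<longrightarrow>
           (\<forall>ell. is_ell s m \<alpha> \<beta> cs \<tau> ell \<longrightarrow>
               (\<forall>z\<in>Iset s m \<alpha> \<beta> cs r. phi_well_defined s m \<alpha> \<beta> cs r ell z))
         \<and> (\<forall>k\<in>Hset s m \<alpha> \<beta> cs r - {\<tau>}.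
               Ycoord s \<alpha> \<beta> cs k (- Bcoef \<alpha> \<beta> cs \<tau> / Acoef \<alpha> \<beta> \<tau>) > 0)
         \<and> (\<forall>ell. is_ell s m \<alpha> \<beta> cs \<tau> ell \<longrightarrow>
               phi_well_defined s m \<alpha> \<beta> cs r ell (- Bcoef \<alpha> \<beta> cs \<tau> / Acoef \<alpha> \<beta> \<tau>))"
proof (intro allI impI)
  fix \<tau> assume tau: "is_tau s m \<alpha> \<beta> cs r \<tau>"
  obtain x where x: "in_compat_class s \<alpha> \<beta> cs x" "pos_steady_state s m \<alpha> \<beta> \<kappa>s x"
    using ss by blast
  have C: "\<And>j. Cconst s \<alpha> \<beta> cs j \<noteq> 0" using C_nonzero[OF onedim x] .
  define H where "H = Hset s m \<alpha> \<beta> cs r"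
  define I where "I = Iset s m \<alpha> \<beta> cs r"
  define A where "A = Acoef \<alpha> \<beta>"
  define B where "B = Bcoef \<alpha> \<beta> cs"
  define L where "L = - B \<tau> / A \<tau>"
  have fH: "finite H" unfolding H_def Hset_def by simp
  have HJ: "\<And>k. k \<in> H \<Longrightarrow> k \<in> Jset s \<alpha> \<beta> \<and> A k \<noteq> 0 \<and> k \<in> {1..r} \<and> k \<in> {1..s}"
    unfolding H_def Hset_def Jset_def A_def by auto
  have tauH: "\<tau> \<in> H" and Atau: "A \<tau> > 0" and Ine: "I \<noteq> {}" and LInf: "Inf I = L"
    using tau unfolding is_tau_def H_def A_def I_def L_def B_def by auto
  have Imem: "\<And>z. z \<in> I \<longleftrightarrow> (\<forall>k\<in>H. z \<in> Iint \<alpha> \<beta> cs k)"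
    unfolding I_def Iset_def H_def by auto
  have Yeq: "\<And>k z. k \<in> H \<Longrightarrow> Ycoord s \<alpha> \<beta> cs k z = (A k * z + B k) / \<bar>A k\<bar>"
    using HJ unfolding Ycoord_def A_def B_def by auto
  have Ypos: "Ycoord s \<alpha> \<beta> cs k z > 0" if k: "k \<in> H" and z: "z \<in> I" for k z
  proof -
    have zk: "z \<in> Iint \<alpha> \<beta> cs k" using z k Imem by auto
    have Ak: "A k \<noteq> 0" using HJ k by auto
    have "A k * z + B k > 0"
    proof (cases "A k > 0")
      case True
      hence "z > - B k / A k" using zk by (simp add: Iint_def A_def B_def)
      thus ?thesis using True by (simp add: field_simps)
    next
      case False
      hence An: "A k < 0" using Ak by simp
      hence "z < - B k / A k" using zk by (simp add: Iint_def A_def B_def)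
      thus ?thesis using An by (simp add: field_simps)
    qed
    thus ?thesis using Yeq[OF k] Ak by simp
  qed
  have P1: "\<forall>ell. is_ell s m \<alpha> \<beta> cs \<tau> ell \<longrightarrow>
               (\<forall>z\<in>Iset s m \<alpha> \<beta> cs r. phi_well_defined s m \<alpha> \<beta> cs r ell z)"
  proof (intro allI impI ballI)
    fix ell z assume "z \<in> Iset s m \<alpha> \<beta> cs r"
    hence z: "z \<in> I" by (simp add: I_def)
    have "(\<Prod>k\<in>H. Ycoord s \<alpha> \<beta> cs k z ^ gam s m \<alpha> \<beta> cs k ell) \<noteq> 0"
      using fH Ypos[OF _ z] by (simp add: prod_zero_iff) (metis less_irrefl)
    thus "phi_well_defined s m \<alpha> \<beta> cs r ell z"
      using C unfolding phi_well_defined_def Ppoly_def H_def by simp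
  qed
  have bdd: "bdd_below I"
  proof -
    have "\<forall>z\<in>I. L < z"
    proof
      fix z assume "z \<in> I"
      hence "z \<in> Iint \<alpha> \<beta> cs \<tau>" using Imem tauH by blast
      thus "L < z" using Atau unfolding Iint_def L_def A_def B_def by simp
    qed
    thus ?thesis by (meson bdd_below.unfold less_imp_le)
  qed
  have Yk: "Ycoord s \<alpha> \<beta> cs k L > 0" if k: "k \<in> H - {\<tau>}" for k
  proof -
    have kH: "k \<in> H" and kt: "k \<noteq> \<tau>" using k by auto
    have Ak: "A k \<noteq> 0" using HJ kH by auto
    obtain z0 where z0: "z0 \<in> I" using Ine by blast
    have "A k * L + B k > 0"
    proof (cases "A k > 0")
      case True
      have lb: "- B k / A k \<le> z" if "z \<in> I" for z
      proof -
        have "z \<in> Iint \<alpha> \<beta> cs k" using that Imem kH by blast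
        thus ?thesis using True unfolding Iint_def A_def B_def by simp
      qed
      have "- B k / A k \<le> L" using cInf_greatest[OF Ine lb] LInf by simp
      moreover have "- B k / A k \<noteq> L"
      proof
        assume eq: "- B k / A k = L"
        hence "- (B k / A k) = - (B \<tau> / A \<tau>)" unfolding L_def by simp
        hence rat: "Bcoef \<alpha> \<beta> cs k / Acoef \<alpha> \<beta> k = Bcoef \<alpha> \<beta> cs \<tau> / Acoef \<alpha> \<beta> \<tau>"
          unfolding A_def B_def by simp
        have "Acoef \<alpha> \<beta> k \<noteq> 0" "Acoef \<alpha> \<beta> \<tau> \<noteq> 0" using Ak Atau unfolding A_def by auto
        hence "cls s \<alpha> \<beta> cs k = cls s \<alpha> \<beta> cs \<tau>"
          unfolding cls_def by (simp only: rat if_True)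
        moreover have "k \<in> {1..r}" "\<tau> \<in> {1..r}" using HJ kH tauH by auto
        ultimately show False using lab kt unfolding classes_labelled_def by blast
      qed
      ultimately have "- B k / A k < L" by simp
      thus ?thesis using True by (simp add: field_simps)
    next
      case False
      hence An: "A k < 0" using Ak by simp
      have "z0 \<in> Iint \<alpha> \<beta> cs k" using z0 Imem kH by blast
      hence "z0 < - B k / A k" using An unfolding Iint_def A_def B_def by simp
      moreover have "L \<le> z0" using cInf_lower[OF z0 bdd] LInf by simp
      ultimately have "L < - B k / A k" by simp
      thus ?thesis using An by (simp add: field_simps)
    qed
    thus ?thesis using Yeq[OF kH] Ak by simp
  qed
  have P2: "\<forall>k\<in>Hset s m \<alpha> \<beta> cs r - {\<tau>}.
               Ycoord s \<alpha> \<beta> cs k (- Bcoef \<alpha> \<beta> cs \<tau> / Acoef \<alpha> \<beta> \<tau>) > 0"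
  proof
    fix k assume "k \<in> Hset s m \<alpha> \<beta> cs r - {\<tau>}"
    hence "k \<in> H - {\<tau>}" by (simp add: H_def)
    from Yk[OF this] show "Ycoord s \<alpha> \<beta> cs k (- Bcoef \<alpha> \<beta> cs \<tau> / Acoef \<alpha> \<beta> \<tau>) > 0"
      by (simp add: L_def A_def B_def)
  qed
  have P3: "\<forall>ell. is_ell s m \<alpha> \<beta> cs \<tau> ell \<longrightarrow>
               phi_well_defined s m \<alpha> \<beta> cs r ell (- Bcoef \<alpha> \<beta> cs \<tau> / Acoef \<alpha> \<beta> \<tau>)"
  proof (intro allI impI)
    fix ell assume ell: "is_ell s m \<alpha> \<beta> cs \<tau> ell"
    have m1: "1 \<le> m" using net by (simp add: reaction_network_def)
    define g where "g = (\<lambda>j. \<Sum>i\<in>cls s \<alpha> \<beta> cs \<tau>. \<alpha> i j)"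
    have fin: "finite (g ` {1..m})" and ne: "g ` {1..m} \<noteq> {}" using m1 by auto
    obtain j0 where j0: "j0 \<in> {1..m}" "g j0 = Min (g ` {1..m})"
      using Min_in[OF fin ne] by auto
    have "gam s m \<alpha> \<beta> cs \<tau> j0 = 0"
      using j0 unfolding gam_def phik_def g_def by simp
    hence g0: "gam s m \<alpha> \<beta> cs \<tau> ell = 0" using ell j0 unfolding is_ell_def by fastforce
    have "Ycoord s \<alpha> \<beta> cs k L ^ gam s m \<alpha> \<beta> cs k ell \<noteq> 0" if "k \<in> H" for k
    proof (cases "k = \<tau>")
      case True thus ?thesis using g0 by simp
    next
      case False thus ?thesis using Yk that by (metis Diff_iff less_irrefl power_not_zero singletonD)
    qed
    hence "(\<Prod>k\<in>H. Ycoord s \<alpha> \<beta> cs k L ^ gam s m \<alpha> \<beta> cs k ell) \<noteq> 0"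
      using fH by (simp add: prod_zero_iff del: power_eq_0_iff)
    thus "phi_well_defined s m \<alpha> \<beta> cs r ell (- Bcoef \<alpha> \<beta> cs \<tau> / Acoef \<alpha> \<beta> \<tau>)"
      using C unfolding phi_well_defined_def Ppoly_def H_def L_def A_def B_def by simp
  qed
  show "(\<forall>ell. is_ell s m \<alpha> \<beta> cs \<tau> ell \<longrightarrow>
               (\<forall>z\<in>Iset s m \<alpha> \<beta> cs r. phi_well_defined s m \<alpha> \<beta> cs r ell z))
         \<and> (\<forall>k\<in>Hset s m \<alpha> \<beta> cs r - {\<tau>}.
               Ycoord s \<alpha> \<beta> cs k (- Bcoef \<alpha> \<beta> cs \<tau> / Acoef \<alpha> \<beta> \<tau>) > 0)
         \<and> (\<forall>ell. is_ell s m \<alpha> \<beta> cs \<tau> ell \<longrightarrow>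
               phi_well_defined s m \<alpha> \<beta> cs r ell (- Bcoef \<alpha> \<beta> cs \<tau> / Acoef \<alpha> \<beta> \<tau>))"
    by (rule conjI[OF P1 conjI[OF P2 P3]])
qed

end
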